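(* Let $\mathcal P$ be a stationary Poisson point process of unit intensity on $\mathbb{R}^d$ and let $(A_n)_{n\ge1}$ be a sequence in $\mathfrak A$ with $A_n\to\mathbb{R}^d$. Let $\mathcal D_n=\mathcal D(\mathcal P\cap A_n)$ and $\mathring{\mathcal D}_n=\mathcal D((\mathcal P\cap A_n)\cup\{\mathbf 0\})$. Then there exist almost surely finite random variables $L,M$ and (random) simplices $\sigma_1,\dots,\sigma_L$ such that for all $n>M$, \[ \mathcal D_n\,\triangle\,\mathring{\mathcal D}_n=\{\sigma_1,\dots,\sigma_L\},\] and moreover $w(\sigma_i)\le M$ for all $i\le L$.
   Context: $W_m=\left[-\tfrac{m^{1/d}}{2},\tfrac{m^{1/d}}{2}\right]^d$; $\mathfrak A$ is the collection of sets $W_m+x$, $m\ge1$, $x\in\mathbb{R}^d$; $A_n\to\mathbb{R}^d$ means $\bigcup_{n}\bigcap_{m\ge n}A_m=\mathbb{R}^d$. For a finite set $\mathcal X\subset\mathbb{R}^d$ in general position, $\mathrm{Vor}_{\mathcal X}(x)=\{y:|y-x|\le|y-x'|\ \forall x'\in\mathcal X\}$, the Delaunay complex $\mathcal D(\mathcal X)$ consists of all $[x_0,\dots,x_k]$ with $\bigcap_i\mathrm{Vor}_{\mathcal X}(x_i)\ne\emptyset$, with weight $w([x_0,\dots,x_k])=\inf\{s:\bigcap_i(B_s(x_i)\cap\mathrm{Vor}_{\mathcal X}(x_i))\ne\emptyset\}$ (here computed in whichever of the two complexes contains the simplex). $\triangle$ denotes symmetric difference of sets of simplices. *)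

theory Defs
  imports "HOL-Probability.Probability"
begin

text \<open>A stationary Poisson point process of unit intensity on the euclidean space 'a,
  realised on the probability space M as a map from outcomes to locally finite
  point configurations (sets of points).\<close>

definition unit_poisson_pp :: "'b measure \<Rightarrow> ('b \<Rightarrow> 'a::euclidean_space set) \<Rightarrow> bool" where
  "unit_poisson_pp M P \<longleftrightarrow>
     prob_space M \<and>
     (\<forall>\<omega>\<in>space M. \<forall>B. bounded B \<longrightarrow> finite (P \<omega> \<inter> B)) \<and>
     (\<forall>B. B \<in> sets borel \<and> bounded B \<longrightarrow>
        (\<lambda>\<omega>. card (P \<omega> \<inter> B)) \<in> measurable M (count_space UNIV) \<and>
        (\<forall>k::nat. measure M {\<omega>\<in>space M. card (P \<omega> \<inter> B) = k}
            = measure lborel B ^ k / fact k * exp (- measure lborel B))) \<and>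
     (\<forall>(I::nat set) (B::nat \<Rightarrow> 'a set). finite I \<and> disjoint_family_on B I \<and>
        (\<forall>i\<in>I. B i \<in> sets borel \<and> bounded (B i)) \<longrightarrow>
        prob_space.indep_vars M (\<lambda>_. count_space UNIV) (\<lambda>i \<omega>. card (P \<omega> \<inter> B i)) I)"

text \<open>W_m = [-m^(1/d)/2, m^(1/d)/2]^d, the cube of volume m centred at the origin.\<close>

definition W :: "real \<Rightarrow> 'a::euclidean_space set" where
  "W m = {y. \<forall>b\<in>Basis. \<bar>y \<bullet> b\<bar> \<le> m powr (1 / real DIM('a)) / 2}"

definition frakA :: "'a::euclidean_space set set" where
  "frakA = {(\<lambda>y. y + x) ` W m | m x. m \<ge> 1}"

definition tends_to_space :: "(nat \<Rightarrow> 'a set) \<Rightarrow> bool" where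
  "tends_to_space A \<longleftrightarrow> (\<Union>n\<in>{1..}. \<Inter>m\<in>{n..}. A m) = UNIV"

definition Vor :: "'a::euclidean_space set \<Rightarrow> 'a \<Rightarrow> 'a set" where
  "Vor X x = {y. \<forall>x'\<in>X. norm (y - x) \<le> norm (y - x')}"

text \<open>A simplex [x_0,...,x_k] is identified with its (nonempty) vertex set.\<close>

definition delaunay :: "'a::euclidean_space set \<Rightarrow> 'a set set" where
  "delaunay X = {S. S \<noteq> {} \<and> S \<subseteq> X \<and> (\<Inter>x\<in>S. Vor X x) \<noteq> {}}"

definition dweight :: "'a::euclidean_space set \<Rightarrow> 'a set \<Rightarrow> real" where
  "dweight X S = Inf {s. (\<Inter>x\<in>S. cball x s \<inter> Vor X x) \<noteq> {}}"

definition symdiff :: "'c set \<Rightarrow> 'c set \<Rightarrow> 'c set" where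
  "symdiff A B = (A - B) \<union> (B - A)"

end

theory Submission
  imports Defs
begin

definition wbox :: "'a::euclidean_space set \<Rightarrow> real \<Rightarrow> 'a set" where
  "wbox S k = cbox (\<Sum>b\<in>Basis. (if b\<in>S then k else -2*k) *\<^sub>R b) (\<Sum>b\<in>Basis. (if b\<in>S then 2*k else -k) *\<^sub>R b)"

lemma mem_wbox: "p \<in> wbox S k \<longleftrightarrow> (\<forall>b\<in>Basis. (if b\<in>S then k \<le> p\<bullet>b \<and> p\<bullet>b \<le> 2*k else -2*k \<le> p\<bullet>b \<and> p\<bullet>b \<le> -k))"
  by (auto simp: wbox_def mem_box)

definition wit :: "'a::euclidean_space set \<Rightarrow> real \<Rightarrow> bool" where
  "wit X k \<longleftrightarrow> (\<forall>S\<subseteq>Basis. \<exists>p\<in>X. p \<in> wbox S k)"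

lemma wbox_norm:
  fixes p :: "'a::euclidean_space"
  assumes "p \<in> wbox S k" "k > 0"
  shows "norm p \<le> 2 * real DIM('a) * k"
proof -
  have "norm p \<le> (\<Sum>b\<in>Basis. \<bar>p \<bullet> b\<bar>)" by (rule norm_le_l1)
  also have "\<dots> \<le> (\<Sum>b\<in>(Basis::'a set). 2*k)"
    apply (rule sum_mono) using assms unfolding mem_wbox by (auto split: if_splits)
  also have "\<dots> = 2 * real DIM('a) * k" by simp
  finally show ?thesis .
qed

lemma V0_bound:
  fixes y :: "'a::euclidean_space"
  assumes "wit X k" "k > 0" "\<forall>x\<in>X. norm y \<le> norm (y - x)"
  shows "norm y \<le> 2 * real DIM('a) * k"
proof -
  define S where "S = {b\<in>Basis. y \<bullet> b \<ge> 0}"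
  obtain p where p: "p \<in> X" "p \<in> wbox S k" using assms(1) unfolding wit_def S_def by (metis (no_types, lifting) mem_Collect_eq subsetI)
  have pb: "\<And>b. b \<in> Basis \<Longrightarrow> (if b\<in>S then k \<le> p\<bullet>b \<and> p\<bullet>b \<le> 2*k else -2*k \<le> p\<bullet>b \<and> p\<bullet>b \<le> -k)"
    using p(2) unfolding mem_wbox by blast
  have "y \<bullet> p = (\<Sum>b\<in>Basis. (y\<bullet>b) * (p\<bullet>b))" by (rule euclidean_inner)
  also have "\<dots> \<ge> (\<Sum>b\<in>Basis. k * \<bar>y\<bullet>b\<bar>)"
  proof (rule sum_mono)
    fix b :: 'a assume b: "b \<in> Basis"
    show "k * \<bar>y\<bullet>b\<bar> \<le> (y\<bullet>b) * (p\<bullet>b)"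
    proof (cases "b \<in> S")
      case True
      then have "y\<bullet>b \<ge> 0" "k \<le> p\<bullet>b" using pb[OF b] S_def by auto
      then show ?thesis by (simp add: mult_right_mono mult.commute)
    next
      case False
      then have "y\<bullet>b < 0" "p\<bullet>b \<le> -k" using pb[OF b] S_def b by auto
      then have "k * (-(y\<bullet>b)) \<le> (-(p\<bullet>b)) * (-(y\<bullet>b))" by (intro mult_right_mono) auto
      then show ?thesis using \<open>y\<bullet>b < 0\<close> by (simp add: mult.commute)
    qed
  qed
  finally have yp: "y \<bullet> p \<ge> k * (\<Sum>b\<in>Basis. \<bar>y\<bullet>b\<bar>)" by (simp add: sum_distrib_left)
  have "k * norm y \<le> k * (\<Sum>b\<in>Basis. \<bar>y\<bullet>b\<bar>)" using norm_le_l1 assms(2) by (simp add: mult_left_mono)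
  with yp have yp2: "k * norm y \<le> y \<bullet> p" by linarith
  have "(norm p)^2 = (\<Sum>b\<in>Basis. (p\<bullet>b)^2)" unfolding power2_norm_eq_inner by (subst euclidean_inner) (simp add: power2_eq_square)
  also have "\<dots> \<le> (\<Sum>b\<in>(Basis::'a set). (2*k)^2)"
  proof (rule sum_mono)
    fix b :: 'a assume b: "b \<in> Basis"
    have "\<bar>p\<bullet>b\<bar> \<le> 2*k" using pb[OF b] assms(2) by (auto split: if_splits)
    show "(p\<bullet>b)^2 \<le> (2*k)^2" using power_mono[OF \<open>\<bar>p\<bullet>b\<bar> \<le> 2*k\<close> abs_ge_zero, of 2] by simp
  qed
  also have "\<dots> = real DIM('a) * 4 * k^2" by (simp add: power2_eq_square)
  finally have pn: "(norm p)^2 \<le> real DIM('a) * 4 * k^2" .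
  have "(norm y)^2 \<le> (norm (y - p))^2" using assms(3) p(1) by (simp add: power_mono)
  also have "\<dots> = (norm y)^2 - 2 * (y \<bullet> p) + (norm p)^2"
    by (simp add: power2_norm_eq_inner inner_diff_left inner_diff_right inner_commute)
  finally have "2 * (y \<bullet> p) \<le> (norm p)^2" by simp
  with yp2 pn have "2 * k * norm y \<le> real DIM('a) * 4 * k^2" by linarith
  then have "k * norm y \<le> k * (2 * real DIM('a) * k)" by (simp add: power2_eq_square algebra_simps)
  then show ?thesis using assms(2) by (simp add: mult_le_cancel_left)
qed

lemma wit_norm_ex:
  fixes X :: "'a::euclidean_space set"
  assumes "wit X k" "k > 0"
  shows "\<exists>p\<in>X. norm p \<le> 2 * real DIM('a) * k"
  using assms wbox_norm unfolding wit_def by blast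

lemma wit_mono: "wit X k \<Longrightarrow> (\<And>p. p \<in> X \<Longrightarrow> norm p \<le> r \<Longrightarrow> p \<in> Y) \<Longrightarrow> k > 0
   \<Longrightarrow> 2 * real DIM('a) * k \<le> r \<Longrightarrow> wit (Y::'a::euclidean_space set) k"
  unfolding wit_def by (meson order.trans wbox_norm)

lemma dweight_le:
  assumes "S \<noteq> {}" "\<forall>x\<in>S. y \<in> Vor X x \<and> norm (y - x) \<le> r"
  shows "dweight X S \<le> r"
  unfolding dweight_def
proof (rule cInf_lower)
  show "r \<in> {s. (\<Inter>x\<in>S. cball x s \<inter> Vor X x) \<noteq> {}}"
  proof -
    have "y \<in> (\<Inter>x\<in>S. cball x r \<inter> Vor X x)" using assms by (auto simp: dist_norm norm_minus_commute)
    then show ?thesis by blast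
  qed
  show "bdd_below {s. (\<Inter>x\<in>S. cball x s \<inter> Vor X x) \<noteq> {}}"
  proof (rule bdd_belowI[of _ 0])
    fix s assume "s \<in> {s. (\<Inter>x\<in>S. cball x s \<inter> Vor X x) \<noteq> {}}"
    then obtain z where "z \<in> (\<Inter>x\<in>S. cball x s \<inter> Vor X x)" by auto
    moreover obtain x where "x \<in> S" using assms by auto
    ultimately have "dist x z \<le> s" by auto
    then show "0 \<le> s" using zero_le_dist order.trans by blast
  qed
qed

lemma Vor_mono: "Y' \<subseteq> Y \<Longrightarrow> Vor Y x \<subseteq> Vor Y' x"
  unfolding Vor_def by auto

lemma mem_delaunay: "S \<in> delaunay X \<longleftrightarrow> S \<noteq> {} \<and> S \<subseteq> X \<and> (\<exists>y. \<forall>x\<in>S. y \<in> Vor X x)"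
  unfolding delaunay_def by auto

lemma D_ins_no0: "S \<in> delaunay (insert 0 Y) \<Longrightarrow> 0 \<notin> S \<Longrightarrow> S \<in> delaunay Y"
  unfolding mem_delaunay using Vor_mono[of Y "insert 0 Y"] by blast

lemma D_no0: "0 \<notin> Y \<Longrightarrow> S \<in> delaunay Y \<Longrightarrow> 0 \<notin> S"
  unfolding mem_delaunay by auto

lemma symdiff_char:
  assumes "0 \<notin> Y"
  shows "S \<in> symdiff (delaunay Y) (delaunay (insert 0 Y)) \<longleftrightarrow>
    (if 0 \<in> S then S \<in> delaunay (insert 0 Y) else S \<in> delaunay Y \<and> S \<notin> delaunay (insert 0 Y))"
  using D_ins_no0[of S Y] D_no0[OF assms, of S] unfolding symdiff_def by auto

lemma key_far:
  fixes Y :: "'a::euclidean_space set"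
  assumes "wit Y k" "k > 0" "S \<in> delaunay Y" "S \<notin> delaunay (insert 0 Y)"
  shows "\<exists>y. (\<forall>x\<in>S. y \<in> Vor Y x \<and> norm (y - x) \<le> 2 * (2 * real DIM('a) * k)) \<and> norm y \<le> 2 * real DIM('a) * k"
proof -
  define R where "R = 2 * real DIM('a) * k"
  obtain y where y: "\<forall>x\<in>S. y \<in> Vor Y x" and SY: "S \<subseteq> Y" "S \<noteq> {}"
    using assms(3) unfolding mem_delaunay by blast
  have "\<exists>x1\<in>S. norm (y - x1) > norm y"
  proof (rule ccontr)
    assume "\<not> ?thesis"
    then have "\<forall>x\<in>S. y \<in> Vor (insert 0 Y) x" using y unfolding Vor_def by auto
    then have "S \<in> delaunay (insert 0 Y)" using SY unfolding mem_delaunay by blast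
    then show False using assms(4) by blast
  qed
  then obtain x1 where x1: "x1 \<in> S" "norm (y - x1) > norm y" by blast
  have "\<forall>x'\<in>Y. norm y \<le> norm (y - x')"
    using y x1 unfolding Vor_def by force
  then have ny: "norm y \<le> R" using V0_bound[OF assms(1,2)] R_def by blast
  obtain p where p: "p \<in> Y" "norm p \<le> R" using wit_norm_ex[OF assms(1,2)] R_def by blast
  have "\<forall>x\<in>S. norm (y - x) \<le> 2 * R"
  proof
    fix x assume "x \<in> S"
    then have "norm (y - x) \<le> norm (y - p)" using y p unfolding Vor_def by blast
    also have "\<dots> \<le> norm y + norm p" by (rule norm_triangle_ineq4)
    finally show "norm (y - x) \<le> 2 * R" using ny p by linarith
  qed
  then show ?thesis using y ny R_def by blast
qed

lemma key_zero:
  fixes Y :: "'a::euclidean_space set"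
  assumes "wit Y k" "k > 0" "S \<in> delaunay (insert 0 Y)" "0 \<in> S"
  shows "\<exists>y. (\<forall>x\<in>S. y \<in> Vor (insert 0 Y) x \<and> norm (y - x) \<le> norm y) \<and> norm y \<le> 2 * real DIM('a) * k"
proof -
  obtain y where y: "\<forall>x\<in>S. y \<in> Vor (insert 0 Y) x"
    using assms(3) unfolding mem_delaunay by blast
  have "y \<in> Vor (insert 0 Y) 0" using y assms(4) by blast
  then have "\<forall>x'\<in>Y. norm y \<le> norm (y - x')" unfolding Vor_def by auto
  then have ny: "norm y \<le> 2 * real DIM('a) * k" using V0_bound[OF assms(1,2)] by blast
  have "\<forall>x\<in>S. norm (y - x) \<le> norm y" using y unfolding Vor_def by fastforce
  then show ?thesis using y ny by blast
qed

lemma vor_iff: "norm (w - x) \<le> norm (w - x') \<longleftrightarrow> 2 * (w \<bullet> (x' - x)) \<le> x' \<bullet> x' - x \<bullet> x"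
proof -
  have "norm (w - x) \<le> norm (w - x') \<longleftrightarrow> (norm (w - x))^2 \<le> (norm (w - x'))^2"
    using norm_ge_zero power2_le_imp_le power_mono by blast
  also have "\<dots> \<longleftrightarrow> 2 * (w \<bullet> (x' - x)) \<le> x' \<bullet> x' - x \<bullet> x"
    by (simp add: power2_norm_eq_inner inner_diff_left inner_diff_right inner_commute algebra_simps)
  finally show ?thesis .
qed

lemma Vor_convex:
  assumes "y \<in> Vor Y x" "z \<in> Vor Y x" "0 \<le> t" "t \<le> 1"
  shows "y + t *\<^sub>R (z - y) \<in> Vor Y x"
  unfolding Vor_def
proof safe
  fix x' assume "x' \<in> Y"
  then have a: "2 * (y \<bullet> (x' - x)) \<le> x' \<bullet> x' - x \<bullet> x" and b: "2 * (z \<bullet> (x' - x)) \<le> x' \<bullet> x' - x \<bullet> x"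
    using assms(1,2) unfolding Vor_def vor_iff by auto
  have "(1 - t) * (2 * (y \<bullet> (x' - x))) \<le> (1 - t) * (x' \<bullet> x' - x \<bullet> x)"
    using a assms(4) by (intro mult_left_mono) auto
  moreover have "t * (2 * (z \<bullet> (x' - x))) \<le> t * (x' \<bullet> x' - x \<bullet> x)"
    using b assms(3) by (intro mult_left_mono) auto
  moreover have "2 * ((y + t *\<^sub>R (z - y)) \<bullet> (x' - x)) = (1 - t) * (2 * (y \<bullet> (x' - x))) + t * (2 * (z \<bullet> (x' - x)))"
    by (simp add: inner_add_left inner_diff_left algebra_simps)
  ultimately show "norm (y + t *\<^sub>R (z - y) - x) \<le> norm (y + t *\<^sub>R (z - y) - x')"
    unfolding vor_iff by (simp add: algebra_simps)
qed

lemma far_ineq: "norm x' - norm y \<le> norm (y - x')"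
  by (metis norm_minus_commute norm_triangle_ineq2)

lemma locality:
  fixes X :: "'a::euclidean_space set"
  assumes X0: "0 \<notin> X" and wX: "wit X k" and k: "k > 0"
  defines "R \<equiv> 2 * real DIM('a) * k"
  defines "X0 \<equiv> X \<inter> cball 0 (3 * R)"
  shows "symdiff (delaunay X) (delaunay (insert 0 X)) = symdiff (delaunay X0) (delaunay (insert 0 X0))"
proof -
  have R0: "R \<ge> 0" using k unfolding R_def by simp
  have wX0: "wit X0 k"
    using wit_mono[OF wX _ k, of "3*R" X0] R0 k unfolding X0_def R_def by (auto simp: dist_norm)
  have 00: "0 \<notin> X0" using X0 X0_def by auto
  have outside: "\<And>x'. x' \<in> X \<Longrightarrow> x' \<notin> X0 \<Longrightarrow> norm x' > 3 * R"
    unfolding X0_def by (auto simp: dist_norm)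
  have sub: "X0 \<subseteq> X" unfolding X0_def by auto
  have case0: "S \<in> delaunay (insert 0 X) \<longleftrightarrow> S \<in> delaunay (insert 0 X0)" if "0 \<in> S" for S
  proof
    assume S: "S \<in> delaunay (insert 0 X)"
    obtain y where y: "\<forall>x\<in>S. y \<in> Vor (insert 0 X) x \<and> norm (y - x) \<le> norm y" "norm y \<le> R"
      using key_zero[OF wX k S \<open>0 \<in> S\<close>] R_def by blast
    have "S \<subseteq> insert 0 X0"
    proof
      fix x assume "x \<in> S"
      then have "x \<in> insert 0 X" using S unfolding mem_delaunay by blast
      moreover have "norm x \<le> 3 * R" using y \<open>x \<in> S\<close> far_ineq[of x y] R0 by fastforce
      ultimately show "x \<in> insert 0 X0" unfolding X0_def by auto
    qed
    moreover have "\<forall>x\<in>S. y \<in> Vor (insert 0 X0) x" using y Vor_mono[of "insert 0 X0" "insert 0 X"] sub by blast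
    ultimately show "S \<in> delaunay (insert 0 X0)" using S unfolding mem_delaunay by blast
  next
    assume S: "S \<in> delaunay (insert 0 X0)"
    obtain y where y: "\<forall>x\<in>S. y \<in> Vor (insert 0 X0) x \<and> norm (y - x) \<le> norm y" "norm y \<le> R"
      using key_zero[OF wX0 k S \<open>0 \<in> S\<close>] R_def by blast
    have "\<forall>x\<in>S. y \<in> Vor (insert 0 X) x"
    proof
      fix x assume x: "x \<in> S"
      show "y \<in> Vor (insert 0 X) x" unfolding Vor_def mem_Collect_eq
      proof (intro ballI)
        fix x' assume x': "x' \<in> insert 0 X"
        show "norm (y - x) \<le> norm (y - x')"
        proof (cases "x' \<in> insert 0 X0")
          case True then show ?thesis using y x unfolding Vor_def by blast
        next
          case False
          then have "norm x' > 3 * R" using outside x' by auto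
          then show ?thesis using far_ineq[of x' y] y x R0 by fastforce
        qed
      qed
    qed
    then show "S \<in> delaunay (insert 0 X)" using S sub unfolding mem_delaunay by blast
  qed
  have case1: "(S \<in> delaunay X \<and> S \<notin> delaunay (insert 0 X)) \<longleftrightarrow> (S \<in> delaunay X0 \<and> S \<notin> delaunay (insert 0 X0))"
    if "0 \<notin> S" for S
  proof
    assume S: "S \<in> delaunay X \<and> S \<notin> delaunay (insert 0 X)"
    obtain y where y: "\<forall>x\<in>S. y \<in> Vor X x \<and> norm (y - x) \<le> 2 * R" "norm y \<le> R"
      using key_far[OF wX k] S R_def by blast
    have SX: "S \<subseteq> X" "S \<noteq> {}" using S unfolding mem_delaunay by auto
    have SX0: "S \<subseteq> X0"
    proof
      fix x assume "x \<in> S"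
      then have "norm x \<le> 3 * R" using y far_ineq[of x y] by fastforce
      then show "x \<in> X0" using SX \<open>x \<in> S\<close> unfolding X0_def by auto
    qed
    have D0: "S \<in> delaunay X0"
      using SX SX0 y Vor_mono[OF sub] unfolding mem_delaunay by blast
    obtain x0 where x0: "x0 \<in> S" using SX by auto
    have gy: "norm (y - x0) > norm y"
    proof (rule ccontr)
      assume nx: "\<not> ?thesis"
      have "\<forall>x\<in>S. norm (y - x) \<le> norm y"
      proof
        fix x assume "x \<in> S"
        then have "norm (y - x) \<le> norm (y - x0)" using y x0 SX unfolding Vor_def by blast
        then show "norm (y - x) \<le> norm y" using nx by linarith
      qed
      then have "\<forall>x\<in>S. y \<in> Vor (insert 0 X) x"
        using y unfolding Vor_def by auto
      then have "S \<in> delaunay (insert 0 X)" using SX unfolding mem_delaunay by blast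
      then show False using S by blast
    qed
    have "S \<notin> delaunay (insert 0 X0)"
    proof
      assume S0: "S \<in> delaunay (insert 0 X0)"
      obtain z where z: "\<forall>x\<in>S. z \<in> Vor (insert 0 X0) x" using S0 unfolding mem_delaunay by blast
      have gz: "norm (z - x0) \<le> norm z" using z x0 unfolding Vor_def by force
      define g where "g w = x0 \<bullet> x0 - 2 * (w \<bullet> x0)" for w
      have g_eq: "(norm (w - x0))^2 - (norm w)^2 = g w" for w
        unfolding g_def by (simp add: power2_norm_eq_inner inner_diff_left inner_diff_right inner_commute)
      have gyp: "g y > 0"
      proof -
        have "(norm y)^2 < (norm (y - x0))^2" using gy by (simp add: power_strict_mono)
        then show ?thesis using g_eq[of y] by linarith
      qed
      have gzn: "g z \<le> 0"
      proof -
        have "(norm (z - x0))^2 \<le> (norm z)^2" using gz by (simp add: power_mono)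
        then show ?thesis using g_eq[of z] by linarith
      qed
      define t where "t = g y / (g y - g z)"
      have t01: "0 \<le> t" "t \<le> 1" using gyp gzn unfolding t_def by (auto simp: divide_simps)
      define w where "w = y + t *\<^sub>R (z - y)"
      have "g w = g y + t * (g z - g y)"
        unfolding g_def w_def by (simp add: inner_add_left inner_diff_left algebra_simps)
      also have "\<dots> = 0" using gyp gzn unfolding t_def by (simp add: divide_simps algebra_simps)
      finally have "g w = 0" .
      then have "(norm (w - x0))^2 = (norm w)^2" using g_eq[of w] by linarith
      then have wx0: "norm (w - x0) = norm w" using power2_eq_iff_nonneg norm_ge_zero by blast
      have wV: "\<forall>x\<in>S. w \<in> Vor X0 x"
      proof
        fix x assume x: "x \<in> S"
        have "y \<in> Vor X0 x" using y x Vor_mono[OF sub] by blast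
        moreover have "z \<in> Vor X0 x" using z x Vor_mono[of X0 "insert 0 X0"] by blast
        ultimately show "w \<in> Vor X0 x" unfolding w_def using Vor_convex t01 by blast
      qed
      have "\<forall>x'\<in>X0. norm w \<le> norm (w - x')" using wV x0 wx0 unfolding Vor_def by force
      then have nw: "norm w \<le> R" using V0_bound[OF wX0 k] R_def by blast
      have "\<forall>x\<in>S. w \<in> Vor (insert 0 X) x"
      proof
        fix x assume x: "x \<in> S"
        have wxx0: "norm (w - x) \<le> norm w" using wV x x0 SX0 wx0 unfolding Vor_def by force
        show "w \<in> Vor (insert 0 X) x" unfolding Vor_def
        proof safe
          show "norm (w - x) \<le> norm (w - 0)" using wxx0 by simp
        next
          fix x' assume x': "x' \<in> X"
          show "norm (w - x) \<le> norm (w - x')"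
          proof (cases "x' \<in> X0")
            case True then show ?thesis using wV x unfolding Vor_def by blast
          next
            case False
            then have "norm x' > 3 * R" using outside x' by auto
            then show ?thesis using far_ineq[of x' w] wxx0 nw R0 by linarith
          qed
        qed
      qed
      then have "S \<in> delaunay (insert 0 X)" using SX unfolding mem_delaunay by blast
      then show False using S by blast
    qed
    then show "S \<in> delaunay X0 \<and> S \<notin> delaunay (insert 0 X0)" using D0 by blast
  next
    assume S: "S \<in> delaunay X0 \<and> S \<notin> delaunay (insert 0 X0)"
    obtain y where y: "\<forall>x\<in>S. y \<in> Vor X0 x \<and> norm (y - x) \<le> 2 * R" "norm y \<le> R"
      using key_far[OF wX0 k] S R_def by blast
    have SX: "S \<subseteq> X0" "S \<noteq> {}" using S unfolding mem_delaunay by auto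
    have "\<forall>x\<in>S. y \<in> Vor X x"
    proof
      fix x assume x: "x \<in> S"
      show "y \<in> Vor X x" unfolding Vor_def
      proof safe
        fix x' assume x': "x' \<in> X"
        show "norm (y - x) \<le> norm (y - x')"
        proof (cases "x' \<in> X0")
          case True then show ?thesis using y x unfolding Vor_def by blast
        next
          case False
          then have "norm x' > 3 * R" using outside x' by auto
          then show ?thesis using far_ineq[of x' y] y x R0 by fastforce
        qed
      qed
    qed
    then have "S \<in> delaunay X" using SX sub unfolding mem_delaunay by blast
    moreover have "S \<notin> delaunay (insert 0 X)"
    proof
      assume "S \<in> delaunay (insert 0 X)"
      then have "S \<in> delaunay (insert 0 X0)"
        using SX Vor_mono[of "insert 0 X0" "insert 0 X"] sub unfolding mem_delaunay by blast
      then show False using S by blast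
    qed
    ultimately show "S \<in> delaunay X \<and> S \<notin> delaunay (insert 0 X)" by blast
  qed
  show ?thesis
  proof (rule set_eqI)
    fix S
    show "S \<in> symdiff (delaunay X) (delaunay (insert 0 X)) \<longleftrightarrow> S \<in> symdiff (delaunay X0) (delaunay (insert 0 X0))"
      unfolding symdiff_char[OF X0] symdiff_char[OF 00] using case0 case1 by auto
  qed
qed

lemma weights:
  fixes X :: "'a::euclidean_space set"
  assumes X0: "0 \<notin> X" and wX: "wit X k" and k: "k > 0"
    and S: "S \<in> symdiff (delaunay X) (delaunay (insert 0 X))"
  shows "(S \<in> delaunay X \<longrightarrow> dweight X S \<le> 4 * real DIM('a) * k) \<and>
         (S \<in> delaunay (insert 0 X) \<longrightarrow> dweight (insert 0 X) S \<le> 4 * real DIM('a) * k)"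
proof safe
  assume D: "S \<in> delaunay X"
  then have "0 \<notin> S" using D_no0[OF X0] by blast
  then have "S \<notin> delaunay (insert 0 X)" using S unfolding symdiff_char[OF X0] by auto
  then obtain y where y: "\<forall>x\<in>S. y \<in> Vor X x \<and> norm (y - x) \<le> 2 * (2 * real DIM('a) * k)"
    using key_far[OF wX k D] by blast
  have "S \<noteq> {}" using D unfolding mem_delaunay by blast
  then show "dweight X S \<le> 4 * real DIM('a) * k" using dweight_le[of S y X "4 * real DIM('a) * k"] y by (simp add: algebra_simps)
next
  assume D: "S \<in> delaunay (insert 0 X)"
  have "0 \<in> S" using S D D_ins_no0 unfolding symdiff_def by blast
  then obtain y where y: "\<forall>x\<in>S. y \<in> Vor (insert 0 X) x \<and> norm (y - x) \<le> norm y" "norm y \<le> 2 * real DIM('a) * k"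
    using key_zero[OF wX k D] by blast
  have "\<forall>x\<in>S. y \<in> Vor (insert 0 X) x \<and> norm (y - x) \<le> 4 * real DIM('a) * k"
  proof -
    have "2 * real DIM('a) * k \<le> 4 * real DIM('a) * k" using k by simp
    then have "norm y \<le> 4 * real DIM('a) * k" using y(2) by linarith
    then show ?thesis using y by (meson order.trans)
  qed
  moreover have "S \<noteq> {}" using D unfolding mem_delaunay by blast
  ultimately show "dweight (insert 0 X) S \<le> 4 * real DIM('a) * k" using dweight_le by blast
qed


lemma mem_translate: "(y::'a::ab_group_add) \<in> (\<lambda>z. z + x) ` S \<longleftrightarrow> y - x \<in> S"
proof
  assume "y \<in> (\<lambda>z. z + x) ` S" then show "y - x \<in> S" by auto
next
  assume "y - x \<in> S" then show "y \<in> (\<lambda>z. z + x) ` S" by (rule rev_image_eqI) simp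
qed

lemma frakA_cball:
  fixes A :: "nat \<Rightarrow> 'a::euclidean_space set"
  assumes "\<forall>n\<ge>1. A n \<in> frakA" "tends_to_space A"
  shows "\<exists>N\<ge>1. \<forall>m\<ge>N. cball 0 r \<subseteq> A m"
proof -
  define Q where "Q = (\<lambda>b. r *\<^sub>R b) ` Basis \<union> (\<lambda>b. - (r *\<^sub>R b)) ` (Basis :: 'a set)"
  have fQ: "finite Q" unfolding Q_def by simp
  have "\<forall>q\<in>Q. \<exists>n\<ge>1. \<forall>m\<ge>n. q \<in> A m"
  proof
    fix q :: 'a assume "q \<in> Q"
    have "q \<in> (\<Union>n\<in>{1..}. \<Inter>m\<in>{n..}. A m)" using assms(2) unfolding tends_to_space_def by simp
    then show "\<exists>n\<ge>1. \<forall>m\<ge>n. q \<in> A m" by auto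
  qed
  then obtain nf where nf: "\<forall>q\<in>Q. nf q \<ge> 1 \<and> (\<forall>m\<ge>nf q. q \<in> A m)" by metis
  define N where "N = Max (insert 1 (nf ` Q))"
  have N1: "N \<ge> 1" unfolding N_def using fQ by simp
  have Nq: "\<And>q. q \<in> Q \<Longrightarrow> nf q \<le> N" unfolding N_def using fQ by simp
  have "\<forall>m\<ge>N. cball 0 r \<subseteq> A m"
  proof (intro allI impI subsetI)
    fix m y assume m: "N \<le> m" and y: "y \<in> cball (0::'a) r"
    have "A m \<in> frakA" using assms(1) m N1 by simp
    then obtain h x where Am: "A m = (\<lambda>z. z + x) ` W h" unfolding frakA_def by blast
    define c where "c = h powr (1 / real DIM('a)) / 2"
    have memA: "\<And>z. z \<in> A m \<longleftrightarrow> (\<forall>b\<in>Basis. \<bar>(z - x) \<bullet> b\<bar> \<le> c)"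
      unfolding Am mem_translate W_def c_def by simp
    have inQ: "\<And>q. q \<in> Q \<Longrightarrow> q \<in> A m" using nf Nq m by (meson order.trans)
    show "y \<in> A m" unfolding memA
    proof
      fix b :: 'a assume b: "b \<in> Basis"
      have "r *\<^sub>R b \<in> A m" "- (r *\<^sub>R b) \<in> A m" using inQ b unfolding Q_def by auto
      then have h1: "\<bar>r - x \<bullet> b\<bar> \<le> c" and h2: "\<bar>- r - x \<bullet> b\<bar> \<le> c"
        using b unfolding memA by (auto simp: inner_diff_left)
      have "\<bar>y \<bullet> b\<bar> \<le> norm y" using b Basis_le_norm by blast
      also have "\<dots> \<le> r" using y by simp
      finally have "\<bar>y \<bullet> b\<bar> \<le> r" .
      then show "\<bar>(y - x) \<bullet> b\<bar> \<le> c" using h1 h2 by (simp add: inner_diff_left abs_le_iff)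
    qed
  qed
  then show ?thesis using N1 by blast
qed

lemma wbox_borel: "wbox S k \<in> sets borel" unfolding wbox_def by simp
lemma wbox_bounded: "bounded (wbox S k)" unfolding wbox_def by simp

lemma wbox_measure:
  assumes "k \<ge> 0"
  shows "measure lborel (wbox S k :: 'a::euclidean_space set) = k ^ DIM('a)"
proof -
  have "measure lborel (wbox S k :: 'a set) = (\<Prod>b\<in>(Basis::'a set). k)"
  proof -
    have e: "\<And>b. (if b\<in>S then 2*k else -k) - (if b\<in>S then k else -2*k) = k" by auto
    show ?thesis unfolding wbox_def measure_lborel_cbox_eq using assms
      by (simp add: inner_diff_left e)
  qed
  then show ?thesis by simp
qed

lemma pp_count:
  assumes "unit_poisson_pp M P" "B \<in> sets borel" "bounded B"
  shows "(\<lambda>\<omega>. card (P \<omega> \<inter> B)) \<in> measurable M (count_space UNIV)"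
    "measure M {\<omega>\<in>space M. card (P \<omega> \<inter> B) = 0} = exp (- measure lborel B)"
    "{\<omega>\<in>space M. card (P \<omega> \<inter> B) = 0} \<in> sets M"
proof -
  show m: "(\<lambda>\<omega>. card (P \<omega> \<inter> B)) \<in> measurable M (count_space UNIV)"
    using assms unfolding unit_poisson_pp_def by blast
  have "measure M {\<omega>\<in>space M. card (P \<omega> \<inter> B) = 0} = measure lborel B ^ 0 / fact 0 * exp (- measure lborel B)"
    using assms unfolding unit_poisson_pp_def by blast
  then show "measure M {\<omega>\<in>space M. card (P \<omega> \<inter> B) = 0} = exp (- measure lborel B)" by simp
  have "(\<lambda>\<omega>. card (P \<omega> \<inter> B)) -` {0} \<inter> space M \<in> sets M"
    using measurable_sets[OF m] by simp
  moreover have "(\<lambda>\<omega>. card (P \<omega> \<inter> B)) -` {0} \<inter> space M = {\<omega>\<in>space M. card (P \<omega> \<inter> B) = 0}" by auto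
  ultimately show "{\<omega>\<in>space M. card (P \<omega> \<inter> B) = 0} \<in> sets M" by simp
qed

lemma pp_prob: "unit_poisson_pp M P \<Longrightarrow> prob_space M"
  unfolding unit_poisson_pp_def by blast

lemma pp_finite: "unit_poisson_pp M P \<Longrightarrow> \<omega> \<in> space M \<Longrightarrow> bounded B \<Longrightarrow> finite (P \<omega> \<inter> B)"
  unfolding unit_poisson_pp_def by blast

lemma AE_no0:
  fixes P :: "'b \<Rightarrow> 'a::euclidean_space set"
  assumes pp: "unit_poisson_pp M P"
  shows "AE \<omega> in M. 0 \<notin> P \<omega>"
proof -
  interpret prob_space M using pp_prob[OF pp] .
  have "prob {\<omega>\<in>space M. card (P \<omega> \<inter> {0}) = 0} = 1"
    using pp_count(2)[OF pp, of "{0}"] by simp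
  then have "AE \<omega> in M. \<omega> \<in> {\<omega>\<in>space M. card (P \<omega> \<inter> {0}) = 0}" by (rule AE_prob_1)
  then show ?thesis
  proof (rule AE_mp[OF _ AE_I2], safe)
    fix \<omega> assume "\<omega> \<in> space M" "card (P \<omega> \<inter> {0}) = 0" "0 \<in> P \<omega>"
    then show False by simp
  qed
qed

lemma AE_wit:
  fixes P :: "'b \<Rightarrow> 'a::euclidean_space set"
  assumes pp: "unit_poisson_pp M P"
  shows "AE \<omega> in M. \<exists>k::nat. 1 \<le> k \<and> (\<forall>S\<in>Pow Basis. card (P \<omega> \<inter> wbox S (real k)) \<noteq> 0)"
proof -
  interpret prob_space M using pp_prob[OF pp] .
  define F where "F S k = {\<omega>\<in>space M. card (P \<omega> \<inter> wbox S (real k)) = 0}" for S and k :: nat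
  define E where "E k = (\<Union>S\<in>Pow (Basis::'a set). F S k)" for k
  have Fs: "F S k \<in> sets M" for S k unfolding F_def by (rule pp_count(3)[OF pp wbox_borel wbox_bounded])
  have Fm: "measure M (F S k) = exp (- (real k ^ DIM('a)))" for S k
    unfolding F_def pp_count(2)[OF pp wbox_borel wbox_bounded] using wbox_measure[of "real k" S] by simp
  have Es: "E k \<in> sets M" for k unfolding E_def using Fs by auto
  have Em: "measure M (E k) \<le> 2 ^ DIM('a) / real k" if k: "k \<ge> 1" for k
  proof -
    have "measure M (E k) \<le> (\<Sum>S\<in>Pow (Basis::'a set). measure M (F S k))"
      unfolding E_def by (rule measure_UNION_le) (auto intro: Fs)
    also have "\<dots> = 2 ^ DIM('a) * exp (- (real k ^ DIM('a)))" by (simp add: Fm card_Pow)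
    also have "\<dots> \<le> 2 ^ DIM('a) * (1 / real k)"
    proof (rule mult_left_mono)
      have "real k \<le> real k ^ DIM('a)"
        using k by (metis DIM_positive One_nat_def Suc_leI of_nat_1 of_nat_mono power_increasing power_one_right)
      then have "exp (- (real k ^ DIM('a))) \<le> exp (- real k)" by simp
      also have "\<dots> = 1 / exp (real k)" by (simp add: exp_minus field_simps)
      also have "\<dots> \<le> 1 / real k"
      proof -
        have "real k \<le> exp (real k)" using exp_ge_add_one_self[of "real k"] by linarith
        then show ?thesis using k by (intro divide_left_mono) auto
      qed
      finally show "exp (- (real k ^ DIM('a))) \<le> 1 / real k" .
    qed simp
    finally show ?thesis by simp
  qed
  define N where "N = (\<Inter>k\<in>{1::nat..}. E k)"
  have Ns: "N \<in> sets M" unfolding N_def using Es by (intro sets.countable_INT) auto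
  have Nm: "measure M N \<le> 2 ^ DIM('a) / real k" if "k \<ge> 1" for k
  proof -
    have "N \<subseteq> E k" unfolding N_def using that by auto
    then have "measure M N \<le> measure M (E k)" using Es by (intro finite_measure_mono)
    then show ?thesis using Em[OF that] by linarith
  qed
  have "measure M N = 0"
  proof (rule ccontr)
    assume "measure M N \<noteq> 0"
    then have pos: "measure M N > 0" using measure_nonneg[of M N] by linarith
    obtain k :: nat where k: "real k > 2 ^ DIM('a) / measure M N" using reals_Archimedean2 by blast
    then have k1: "k \<ge> 1" using pos by (metis divide_pos_pos le_less_trans less_one not_le of_nat_0 zero_less_numeral zero_less_power of_nat_less_0_iff order_less_imp_le order.asym linorder_le_less_linear) 
    have "measure M N * real k > 2 ^ DIM('a)" using k pos by (simp add: field_simps)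
    moreover have "measure M N * real k \<le> 2 ^ DIM('a)" using Nm[OF k1] k1 by (simp add: field_simps)
    ultimately show False by linarith
  qed
  then have "N \<in> null_sets M" using Ns by (simp add: null_sets_def emeasure_eq_measure)
  then show ?thesis
  proof (rule AE_I')
    show "{\<omega> \<in> space M. \<not> (\<exists>k::nat. 1 \<le> k \<and> (\<forall>S\<in>Pow Basis. card (P \<omega> \<inter> wbox S (real k)) \<noteq> 0))} \<subseteq> N"
      unfolding N_def E_def F_def by auto
  qed
qed


lemma enum_ex:
  assumes "finite T" "T \<noteq> {}" "card T \<le> L"
  shows "\<exists>f::nat \<Rightarrow> 'c. f ` {1..L} = T"
proof -
  obtain h where h: "bij_betw h {1..card T} T" using ex_bij_betw_nat_finite_1[OF assms(1)] by blast
  have c1: "card T \<ge> 1" using assms(1,2) by (simp add: Suc_leI card_gt_0_iff)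
  define f where "f i = (if i \<le> card T then h i else h 1)" for i
  have "f ` {1..L} = T"
  proof
    show "f ` {1..L} \<subseteq> T"
    proof
      fix t assume "t \<in> f ` {1..L}"
      then obtain i where i: "i \<in> {1..L}" "t = f i" by blast
      show "t \<in> T"
      proof (cases "i \<le> card T")
        case True then show ?thesis using i h unfolding f_def bij_betw_def by auto
      next
        case False then show ?thesis using i h c1 unfolding f_def bij_betw_def by auto
      qed
    qed
    show "T \<subseteq> f ` {1..L}"
    proof
      fix t assume "t \<in> T"
      then obtain i where i: "i \<in> {1..card T}" "t = h i" using h by (metis bij_betw_def imageE)
      then have "f i = t" unfolding f_def by simp
      moreover have "i \<in> {1..L}" using i assms(3) by auto
      ultimately show "t \<in> f ` {1..L}" by blast
    qed
  qed
  then show ?thesis by blast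
qed

lemma delaunay_Pow: "delaunay Y \<subseteq> Pow Y" unfolding delaunay_def by auto

theorem proposition3p12:
  fixes M :: "'b measure" and P :: "'b \<Rightarrow> 'a::euclidean_space set"
    and A :: "nat \<Rightarrow> 'a set"
  assumes "unit_poisson_pp M P"
    and "\<forall>n\<ge>1. A n \<in> frakA"
    and "tends_to_space A"
  shows "\<exists>(L :: 'b \<Rightarrow> nat) (K :: 'b \<Rightarrow> real) (\<sigma> :: 'b \<Rightarrow> nat \<Rightarrow> 'a set).
           L \<in> measurable M (count_space UNIV) \<and> K \<in> borel_measurable M \<and>
           (AE \<omega> in M. \<forall>n\<ge>1. real n > K \<omega> \<longrightarrow>
              symdiff (delaunay (P \<omega> \<inter> A n)) (delaunay (insert 0 (P \<omega> \<inter> A n)))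
                = \<sigma> \<omega> ` {1..L \<omega>} \<and>
              (\<forall>i\<in>{1..L \<omega>}.
                 (\<sigma> \<omega> i \<in> delaunay (P \<omega> \<inter> A n) \<longrightarrow> dweight (P \<omega> \<inter> A n) (\<sigma> \<omega> i) \<le> K \<omega>) \<and>
                 (\<sigma> \<omega> i \<in> delaunay (insert 0 (P \<omega> \<inter> A n)) \<longrightarrow>
                    dweight (insert 0 (P \<omega> \<inter> A n)) (\<sigma> \<omega> i) \<le> K \<omega>)))"
proof -
  note pp = assms(1)
  define kf where "kf \<omega> = (LEAST k::nat. 1 \<le> k \<and> (\<forall>S\<in>Pow Basis. card (P \<omega> \<inter> wbox S (real k)) \<noteq> 0))" for \<omega>
  define rho where "rho i = 3 * (2 * real DIM('a) * real i)" for i :: nat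
  define Nf where "Nf r = (SOME N. N \<ge> 1 \<and> (\<forall>m\<ge>N. cball (0::'a) r \<subseteq> A m))" for r
  define K where "K \<omega> = real (Nf (rho (kf \<omega>))) + 4 * real DIM('a) * real (kf \<omega>)" for \<omega>
  define L where "L \<omega> = (2::nat) ^ (card (P \<omega> \<inter> cball 0 (rho (kf \<omega>))) + 1)" for \<omega>
  define T where "T \<omega> = symdiff (delaunay (P \<omega> \<inter> cball 0 (rho (kf \<omega>))))
                          (delaunay (insert 0 (P \<omega> \<inter> cball 0 (rho (kf \<omega>)))))" for \<omega>
  define \<sigma> where "\<sigma> \<omega> = (SOME f. f ` {1..L \<omega>} = T \<omega>)" for \<omega>
  have cm[measurable]: "\<And>S i. (\<lambda>\<omega>. card (P \<omega> \<inter> wbox S (real i))) \<in> measurable M (count_space UNIV)"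
    using pp_count(1)[OF pp wbox_borel wbox_bounded] by blast
  have kf_m: "kf \<in> measurable M (count_space UNIV)"
    unfolding kf_def by measurable
  have K_m: "K \<in> borel_measurable M"
    unfolding K_def by (rule measurable_compose[OF kf_m]) simp
  have L_m: "L \<in> measurable M (count_space UNIV)"
  proof -
    have "\<And>i. (\<lambda>\<omega>. 2 ^ (card (P \<omega> \<inter> cball 0 (rho i)) + 1) :: nat) \<in> measurable M (count_space UNIV)"
      by (rule measurable_compose[OF pp_count(1)[OF pp]]) auto
    then show ?thesis unfolding L_def by (rule measurable_compose_countable[OF _ kf_m])
  qed
  have AE: "AE \<omega> in M. \<forall>n\<ge>1. real n > K \<omega> \<longrightarrow>
              symdiff (delaunay (P \<omega> \<inter> A n)) (delaunay (insert 0 (P \<omega> \<inter> A n)))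
                = \<sigma> \<omega> ` {1..L \<omega>} \<and>
              (\<forall>i\<in>{1..L \<omega>}.
                 (\<sigma> \<omega> i \<in> delaunay (P \<omega> \<inter> A n) \<longrightarrow> dweight (P \<omega> \<inter> A n) (\<sigma> \<omega> i) \<le> K \<omega>) \<and>
                 (\<sigma> \<omega> i \<in> delaunay (insert 0 (P \<omega> \<inter> A n)) \<longrightarrow>
                    dweight (insert 0 (P \<omega> \<inter> A n)) (\<sigma> \<omega> i) \<le> K \<omega>))"
    using AE_no0[OF pp] AE_wit[OF pp] AE_space
  proof (eventually_elim)
    case (elim \<omega>)
    note no0 = elim(1)
    define k where "k = kf \<omega>"
    have hk: "1 \<le> k \<and> (\<forall>S\<in>Pow Basis. card (P \<omega> \<inter> wbox S (real k)) \<noteq> 0)"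
      unfolding k_def kf_def using elim(2) by (rule LeastI_ex)
    have kpos: "real k > 0" using hk by simp
    define r where "r = rho k"
    obtain Nr where Nr: "Nr \<ge> 1" "\<forall>m\<ge>Nr. cball (0::'a) r \<subseteq> A m"
      using frakA_cball[OF assms(2,3)] by blast
    have Nf: "Nf r \<ge> 1 \<and> (\<forall>m\<ge>Nf r. cball (0::'a) r \<subseteq> A m)"
      unfolding Nf_def by (rule someI[of _ Nr]) (use Nr in blast)
    define X0 where "X0 = P \<omega> \<inter> cball 0 r"
    have fin: "finite X0" unfolding X0_def using pp_finite[OF pp elim(3)] by simp
    have TX0: "T \<omega> = symdiff (delaunay X0) (delaunay (insert 0 X0))"
      unfolding T_def X0_def r_def k_def ..
    have X00: "0 \<notin> X0" using no0 X0_def by auto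
    have "{0} \<in> delaunay (insert 0 X0)" unfolding mem_delaunay Vor_def by (auto intro!: exI[of _ 0])
    moreover have "{0} \<notin> delaunay X0" unfolding mem_delaunay using X00 by auto
    ultimately have Tne: "T \<omega> \<noteq> {}" unfolding TX0 symdiff_def by auto
    have Tsub: "T \<omega> \<subseteq> Pow (insert 0 X0)"
      unfolding TX0 symdiff_def using delaunay_Pow[of X0] delaunay_Pow[of "insert 0 X0"] by auto
    have finT: "finite (T \<omega>)" using Tsub fin finite_subset by blast
    have "card (T \<omega>) \<le> card (Pow (insert 0 X0))" using Tsub fin by (intro card_mono) auto
    also have "\<dots> = 2 ^ card (insert 0 X0)" using fin by (simp add: card_Pow)
    also have "\<dots> \<le> 2 ^ (card X0 + 1)" by (intro power_increasing) (use card_insert_le_m1[of 0 X0] fin card_insert_if[of X0 0] in auto)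
    finally have cardT: "card (T \<omega>) \<le> L \<omega>" unfolding L_def X0_def r_def k_def by simp
    have sig: "\<sigma> \<omega> ` {1..L \<omega>} = T \<omega>"
      unfolding \<sigma>_def using enum_ex[OF finT Tne cardT] by (rule someI_ex)
    show ?case
    proof (intro allI impI)
      fix n :: nat assume n1: "1 \<le> n" and nK: "K \<omega> < real n"
      have "real (Nf r) \<le> K \<omega>" unfolding K_def r_def k_def by simp
      then have "Nf r \<le> n" using nK by linarith
      then have sub: "cball 0 r \<subseteq> A n" using Nf by blast
      define X where "X = P \<omega> \<inter> A n"
      have X0': "0 \<notin> X" using no0 X_def by auto
      have witX: "wit X (real k)" unfolding wit_def
      proof (intro allI impI)
        fix S :: "'a set" assume S: "S \<subseteq> Basis"
        then have "card (P \<omega> \<inter> wbox S (real k)) \<noteq> 0" using hk by auto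
        then obtain p where p: "p \<in> P \<omega>" "p \<in> wbox S (real k)" by (metis card.empty disjoint_iff)
        have "norm p \<le> 2 * real DIM('a) * real k" using wbox_norm[OF p(2) kpos] .
        also have "\<dots> \<le> r" unfolding r_def rho_def using kpos by simp
        finally have "p \<in> A n" using sub by auto
        then show "\<exists>p\<in>X. p \<in> wbox S (real k)" using p X_def by blast
      qed
      have eqX0: "X \<inter> cball 0 (3 * (2 * real DIM('a) * real k)) = X0"
        unfolding X_def X0_def r_def rho_def using sub[unfolded r_def rho_def] by auto
      have symX: "symdiff (delaunay X) (delaunay (insert 0 X)) = T \<omega>"
        unfolding TX0 using locality[OF X0' witX kpos] eqX0 by simp
      have "4 * real DIM('a) * real k \<le> K \<omega>" unfolding K_def k_def by simp
      moreover have "\<forall>i\<in>{1..L \<omega>}.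
                 (\<sigma> \<omega> i \<in> delaunay X \<longrightarrow> dweight X (\<sigma> \<omega> i) \<le> 4 * real DIM('a) * real k) \<and>
                 (\<sigma> \<omega> i \<in> delaunay (insert 0 X) \<longrightarrow> dweight (insert 0 X) (\<sigma> \<omega> i) \<le> 4 * real DIM('a) * real k)"
      proof
        fix i assume "i \<in> {1..L \<omega>}"
        then have "\<sigma> \<omega> i \<in> symdiff (delaunay X) (delaunay (insert 0 X))" using sig symX by blast
        then show "(\<sigma> \<omega> i \<in> delaunay X \<longrightarrow> dweight X (\<sigma> \<omega> i) \<le> 4 * real DIM('a) * real k) \<and>
                 (\<sigma> \<omega> i \<in> delaunay (insert 0 X) \<longrightarrow> dweight (insert 0 X) (\<sigma> \<omega> i) \<le> 4 * real DIM('a) * real k)"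
          by (rule weights[OF X0' witX kpos])
      qed
      ultimately show "symdiff (delaunay (P \<omega> \<inter> A n)) (delaunay (insert 0 (P \<omega> \<inter> A n))) = \<sigma> \<omega> ` {1..L \<omega>} \<and>
              (\<forall>i\<in>{1..L \<omega>}.
                 (\<sigma> \<omega> i \<in> delaunay (P \<omega> \<inter> A n) \<longrightarrow> dweight (P \<omega> \<inter> A n) (\<sigma> \<omega> i) \<le> K \<omega>) \<and>
                 (\<sigma> \<omega> i \<in> delaunay (insert 0 (P \<omega> \<inter> A n)) \<longrightarrow>
                    dweight (insert 0 (P \<omega> \<inter> A n)) (\<sigma> \<omega> i) \<le> K \<omega>))"
        using symX sig unfolding X_def by force
    qed
  qed
  show ?thesis using L_m K_m AE by blast
qed

end
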